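(* Let $n,d\ge1$ and $p\ge 2d+1$. Let $\Delta\in\mathbb{R}^{nd\times nd}$ be symmetric with $d\times d$ blocks, $\Delta_{ii}=0$, $Z^{\top}=[I_d,\dots,I_d]$, $A=ZZ^{\top}+\Delta$, and $f(S)=\langle A,SS^{\top}\rangle$ on $\{S\in\mathbb{R}^{nd\times p}:S_iS_i^{\top}=I_d\ \forall i\}$. Then every second-order critical point $S$ of $f$ satisfies \[ d_F(S,Z)\le\delta\sqrt{\frac dn}\,\|\Delta\|_{\mathrm{op}},\qquad \delta=\frac{(2+\sqrt5)(p+d)\gamma}{p-2d},\qquad \gamma=\frac{\|\mathrm{Tr}_d(\Delta)\|_{\mathrm{op}}}{\|\Delta\|_{\mathrm{op}}}\vee1, \] where $\mathrm{Tr}_d(\Delta)=[\mathrm{Tr}(\Delta_{ij})]_{i,j}\in\mathbb{R}^{n\times n}$ is the partial trace of $\Delta$.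
   Context: $S_i$ is the $i$-th $d\times p$ block of $S$; $\langle X,Y\rangle=\mathrm{Tr}(XY^{\top})$; $A_{ij}=I_d+\Delta_{ij}$. Put $\Lambda_{ii}=\frac12\sum_{j}(S_iS_j^{\top}A_{ji}+A_{ij}S_jS_i^{\top})$ and $T_{S_i}=\{Y\in\mathbb{R}^{d\times p}:S_iY^{\top}+YS_i^{\top}=0\}$. $S$ is a second-order critical point of $f$ if $\sum_jA_{ij}S_j=\Lambda_{ii}S_i$ for all $i$ and $\sum_i\langle\Lambda_{ii},\dot S_i\dot S_i^{\top}\rangle\ge\sum_{i,j}\langle A_{ij},\dot S_i\dot S_j^{\top}\rangle$ for all $\dot S_i\in T_{S_i}$. $d_F(S,Z)=\min\{(\sum_i\|S_i-Q\|_F^2)^{1/2}:Q\in\mathbb{R}^{d\times p},QQ^{\top}=I_d\}$. $a\vee b=\max\{a,b\}$. *)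

theory Defs
  imports "HOL-Analysis.Analysis"
begin

text \<open>Conventions. The index sets {1..n}, {1..d}, {1..p} are the finite types 'n, 'd, 'p
 (n = CARD('n), d = CARD('d), p = CARD('p)). An nd x nd matrix is indexed by pairs (i,a),
 i block index, a index within the block. An nd x p matrix S is given by its d x p blocks S i.\<close>

definition blk :: "real^('n::finite \<times> 'd::finite)^('n \<times> 'd) \<Rightarrow> 'n \<Rightarrow> 'n \<Rightarrow> real^'d^'d" where
  "blk M i j = (\<chi> a b. M $ (i,a) $ (j,b))"

definition frob_inner :: "real^'c::finite^'r::finite \<Rightarrow> real^'c^'r \<Rightarrow> real" where
  "frob_inner X Y = trace (X ** transpose Y)"

definition Amat :: "real^('n::finite \<times> 'd::finite)^('n \<times> 'd) \<Rightarrow> 'n \<Rightarrow> 'n \<Rightarrow> real^'d^'d" where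
  "Amat \<Delta> i j = mat 1 + blk \<Delta> i j"

definition Lam :: "real^('n::finite \<times> 'd::finite)^('n \<times> 'd) \<Rightarrow> ('n \<Rightarrow> real^'p::finite^'d) \<Rightarrow> 'n \<Rightarrow> real^'d^'d" where
  "Lam \<Delta> S i = (1/2) *\<^sub>R (\<Sum>j\<in>UNIV. S i ** transpose (S j) ** Amat \<Delta> j i
                                   + Amat \<Delta> i j ** S j ** transpose (S i))"

definition tangent :: "real^'p::finite^'d::finite \<Rightarrow> (real^'p^'d) set" where
  "tangent Si = {Y. Si ** transpose Y + Y ** transpose Si = 0}"

definition feasible :: "('n \<Rightarrow> real^'p::finite^'d::finite) \<Rightarrow> bool" where
  "feasible S \<longleftrightarrow> (\<forall>i. S i ** transpose (S i) = mat 1)"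

definition second_order_critical ::
  "real^('n::finite \<times> 'd::finite)^('n \<times> 'd) \<Rightarrow> ('n \<Rightarrow> real^'p^'d) \<Rightarrow> bool" where
  "second_order_critical \<Delta> S \<longleftrightarrow>
     feasible S \<and>
     (\<forall>i. (\<Sum>j\<in>UNIV. Amat \<Delta> i j ** S j) = Lam \<Delta> S i ** S i) \<and>
     (\<forall>Sd :: 'n \<Rightarrow> real^'p^'d. (\<forall>i. Sd i \<in> tangent (S i)) \<longrightarrow>
        (\<Sum>i\<in>UNIV. frob_inner (Lam \<Delta> S i) (Sd i ** transpose (Sd i)))
        \<ge> (\<Sum>i\<in>UNIV. \<Sum>j\<in>UNIV. frob_inner (Amat \<Delta> i j) (Sd i ** transpose (Sd j))))"

text \<open>d_F(S,Z): norm on real^'p^'d is the Frobenius norm.\<close>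
definition dF :: "('n::finite \<Rightarrow> real^'p::finite^'d::finite) \<Rightarrow> real" where
  "dF S = Inf {sqrt (\<Sum>i\<in>UNIV. (norm (S i - Q))\<^sup>2) | Q :: real^'p^'d. Q ** transpose Q = mat 1}"

definition op_norm :: "real^'m::finite^'m \<Rightarrow> real" where
  "op_norm M = onorm (\<lambda>x. M *v x)"

definition partial_trace :: "real^('n::finite \<times> 'd::finite)^('n \<times> 'd) \<Rightarrow> real^'n^'n" where
  "partial_trace \<Delta> = (\<chi> i j. trace (blk \<Delta> i j))"

end

theory Submission
  imports Defs
begin


lemma inner_trace:
  fixes X Y :: "real^'c::finite^'r::finite"
  shows "inner X Y = trace (X ** transpose Y)"
  by (simp add: trace_def matrix_matrix_mult_def transpose_def inner_vec_def inner_real_def)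

lemma frob_inner_eq: "frob_inner X Y = inner X Y"
  by (simp add: frob_inner_def inner_trace)

lemma trace_transpose: "trace (transpose (A::real^'n::finite^'n)) = trace A"
  by (simp add: trace_def transpose_def)

lemma inner_mult_left:
  fixes A :: "real^'k::finite^'r::finite" and B :: "real^'c::finite^'k" and C :: "real^'c^'r"
  shows "inner (A ** B) C = inner A (C ** transpose B)"
  by (simp add: inner_trace matrix_transpose_mul matrix_mul_assoc)

lemma inner_mult_right:
  fixes A :: "real^'k::finite^'r::finite" and B :: "real^'c::finite^'k" and C :: "real^'c^'r"
  shows "inner (A ** B) C = inner B (transpose A ** C)"
proof -
  have "inner (A ** B) C = trace (A ** (B ** transpose C))"
    by (simp add: inner_trace matrix_mul_assoc)
  also have "\<dots> = trace ((B ** transpose C) ** A)" by (rule trace_mul_sym)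
  also have "\<dots> = inner B (transpose A ** C)"
    by (simp add: inner_trace matrix_transpose_mul matrix_mul_assoc)
  finally show ?thesis .
qed

lemma matrix_add_rdistrib: "((A::real^'k::finite^'r::finite) + B) ** (C::real^'c::finite^'k) = A ** C + B ** C"
  by (vector matrix_matrix_mult_def sum.distrib[symmetric] field_simps)

lemma matrix_sub_rdistrib: "((A::real^'k::finite^'r::finite) - B) ** (C::real^'c::finite^'k) = A ** C - B ** C"
  by (vector matrix_matrix_mult_def sum_subtractf[symmetric] field_simps)

lemma matrix_sub_ldistrib: "(C::real^'k::finite^'r::finite) ** ((A::real^'c::finite^'k) - B) = C ** A - C ** B"
  by (vector matrix_matrix_mult_def sum_subtractf[symmetric] field_simps)

lemma matrix_sum_rdistrib:
  "(sum f I) ** (C::real^'c::finite^'k::finite) = sum (\<lambda>i. (f i :: real^'k^'r::finite) ** C) I"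
  by (induction I rule: infinite_finite_induct) (simp_all add: matrix_add_rdistrib)

lemma matrix_sum_ldistrib:
  "(C::real^'k::finite^'r::finite) ** (sum f I) = sum (\<lambda>i. C ** (f i :: real^'c::finite^'k)) I"
  by (induction I rule: infinite_finite_induct) (simp_all add: matrix_add_ldistrib)

lemma trace_sum: "trace (sum f I) = sum (\<lambda>i. trace (f i :: real^'n::finite^'n)) I"
  unfolding trace_def by (simp add: sum.swap[of _ UNIV I])

lemma trace_scaleR: "trace (c *\<^sub>R (A::real^'n::finite^'n)) = c * trace A"
  by (simp add: trace_def sum_distrib_left)

lemma transpose_add: "transpose ((A::real^'c::finite^'r::finite) + B) = transpose A + transpose B"
  by (vector transpose_def)

lemma transpose_diff: "transpose ((A::real^'c::finite^'r::finite) - B) = transpose A - transpose B"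
  by (vector transpose_def)

lemma inner_gram:
  fixes A :: "real^'c::finite^'r::finite" and B :: "real^'c^'s::finite"
  shows "inner (transpose A ** A) (transpose B ** B) = (norm (A ** transpose B))^2"
proof -
  have "inner (transpose A ** A) (transpose B ** B) = inner A (A ** (transpose B ** B))"
    by (simp add: inner_mult_right)
  also have "\<dots> = inner A ((A ** transpose B) ** transpose (transpose B))"
    by (simp add: matrix_mul_assoc)
  also have "\<dots> = inner (A ** transpose B) (A ** transpose B)"
    by (simp add: inner_mult_left)
  finally show ?thesis by (simp add: power2_norm_eq_inner)
qed

lemma norm_mat1_sq: "(norm (mat 1 :: real^'d::finite^'d))^2 = real CARD('d)"
  by (simp add: power2_norm_eq_inner inner_trace trace_I)

lemma inner_mat1: "inner (A::real^'d::finite^'d) (mat 1) = trace A"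
  by (simp add: inner_trace)



lemma norm_sq_vec: "(norm (x::real^'m::finite))^2 = (\<Sum>i\<in>UNIV. (x$i)^2)"
  by (simp only: power2_norm_eq_inner) (simp add: inner_vec_def inner_real_def power2_eq_square)

lemma norm_sq_euclid: "(norm (x::'v::euclidean_space))^2 = (\<Sum>b\<in>Basis. (inner x b)^2)"
  by (simp only: power2_norm_eq_inner) (simp add: euclidean_inner[of x x] power2_eq_square)

lemma bilin_bound:
  fixes K :: "real^'m::finite^'m" and U V :: "'m \<Rightarrow> 'v::euclidean_space"
  shows "(\<Sum>i\<in>UNIV. \<Sum>j\<in>UNIV. K$i$j * inner (U i) (V j))
          \<le> onorm ((*v) K) * sqrt (\<Sum>i\<in>UNIV. (norm (U i))^2) * sqrt (\<Sum>j\<in>UNIV. (norm (V j))^2)"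
proof -
  define u where "u b = (\<chi> i. inner (U i) b)" for b
  define v where "v b = (\<chi> j. inner (V j) b)" for b
  define D where "D = onorm ((*v) K)"
  have D0: "0 \<le> D" unfolding D_def by (rule onorm_pos_le) simp
  have "(\<Sum>i\<in>UNIV. \<Sum>j\<in>UNIV. K$i$j * inner (U i) (V j))
      = (\<Sum>i\<in>UNIV. \<Sum>j\<in>UNIV. \<Sum>b\<in>Basis. K$i$j * (inner (U i) b * inner (V j) b))"
    by (simp add: euclidean_inner[of "U _" "V _"] sum_distrib_left)
  also have "\<dots> = (\<Sum>b\<in>Basis. \<Sum>i\<in>UNIV. \<Sum>j\<in>UNIV. K$i$j * (inner (U i) b * inner (V j) b))"
    by (simp add: sum.swap[of _ Basis])
  also have "\<dots> = (\<Sum>b\<in>Basis. inner (u b) (K *v v b))"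
    by (simp add: u_def v_def inner_vec_def matrix_vector_mult_def sum_distrib_left mult_ac)
  also have "\<dots> \<le> (\<Sum>b\<in>Basis. norm (u b) * (D * norm (v b)))"
  proof (rule sum_mono)
    fix b :: 'v
    have "inner (u b) (K *v v b) \<le> norm (u b) * norm (K *v v b)"
      by (rule norm_cauchy_schwarz)
    also have "\<dots> \<le> norm (u b) * (D * norm (v b))"
      unfolding D_def by (rule mult_left_mono[OF onorm]) simp_all
    finally show "inner (u b) (K *v v b) \<le> norm (u b) * (D * norm (v b))" .
  qed
  also have "\<dots> = D * (\<Sum>b\<in>Basis. \<bar>norm (u b)\<bar> * \<bar>norm (v b)\<bar>)"
    by (simp add: sum_distrib_left mult_ac)
  also have "\<dots> \<le> D * (L2_set (\<lambda>b. norm (u b)) Basis * L2_set (\<lambda>b. norm (v b)) Basis)"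
    by (rule mult_left_mono[OF L2_set_mult_ineq D0])
  also have "L2_set (\<lambda>b. norm (u b)) Basis = sqrt (\<Sum>i\<in>UNIV. (norm (U i))^2)"
    by (simp add: L2_set_def u_def norm_sq_vec norm_sq_euclid sum.swap[of _ Basis])
  also have "L2_set (\<lambda>b. norm (v b)) Basis = sqrt (\<Sum>i\<in>UNIV. (norm (V i))^2)"
    by (simp add: L2_set_def v_def norm_sq_vec norm_sq_euclid sum.swap[of _ Basis])
  finally show ?thesis by (simp add: D_def mult_ac)
qed

lemma sum_UNIV_prod: "(\<Sum>x\<in>(UNIV::('a::finite \<times> 'b::finite) set). f x) = (\<Sum>i\<in>UNIV. \<Sum>a\<in>UNIV. f (i,a))"
  by (simp add: UNIV_Times_UNIV[symmetric] sum.cartesian_product del: UNIV_Times_UNIV)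

lemma norm_sq_mat: "(norm (X::real^'c::finite^'r::finite))^2 = (\<Sum>a\<in>UNIV. (norm (X$a))^2)"
  by (simp add: power2_norm_eq_inner inner_vec_def)

lemma sum3_swap: "(\<Sum>l\<in>A. \<Sum>j\<in>B. \<Sum>b\<in>C. f l j b) = (\<Sum>j\<in>B. \<Sum>b\<in>C. \<Sum>l\<in>A. f l j b)"
proof -
  have "(\<Sum>l\<in>A. \<Sum>j\<in>B. \<Sum>b\<in>C. f l j b) = (\<Sum>j\<in>B. \<Sum>l\<in>A. \<Sum>b\<in>C. f l j b)" by (rule sum.swap)
  also have "\<dots> = (\<Sum>j\<in>B. \<Sum>b\<in>C. \<Sum>l\<in>A. f l j b)" by (rule sum.cong[OF refl], rule sum.swap)
  finally show ?thesis .
qed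

lemma delta_bound:
  fixes \<Delta> :: "real^('n::finite \<times> 'd::finite)^('n \<times> 'd)" and U V :: "'n \<Rightarrow> real^'p::finite^'d"
  shows "(\<Sum>i\<in>UNIV. inner (\<Sum>j\<in>UNIV. blk \<Delta> i j ** V j) (U i))
     \<le> op_norm \<Delta> * sqrt (\<Sum>i\<in>UNIV. (norm (U i))^2) * sqrt (\<Sum>i\<in>UNIV. (norm (V i))^2)"
proof -
  define U' where "U' x = U (fst x) $ snd x" for x
  define V' where "V' x = V (fst x) $ snd x" for x
  have "(\<Sum>i\<in>UNIV. inner (\<Sum>j\<in>UNIV. blk \<Delta> i j ** V j) (U i))
      = (\<Sum>x\<in>UNIV. \<Sum>y\<in>UNIV. \<Delta>$x$y * inner (U' x) (V' y))"
    apply (simp add: sum_UNIV_prod U'_def V'_def inner_vec_def blk_def matrix_matrix_mult_def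
        inner_real_def sum_distrib_left sum_distrib_right mult_ac)
    apply (rule sum.cong[OF refl], rule sum.cong[OF refl])
    apply (subst sum3_swap) apply simp
    done
  also have "\<dots> \<le> op_norm \<Delta> * sqrt (\<Sum>x\<in>UNIV. (norm (U' x))^2) * sqrt (\<Sum>x\<in>UNIV. (norm (V' x))^2)"
    unfolding op_norm_def by (rule bilin_bound)
  also have "(\<Sum>x\<in>UNIV. (norm (U' x))^2) = (\<Sum>i\<in>UNIV. (norm (U i))^2)"
    by (simp add: sum_UNIV_prod U'_def norm_sq_mat)
  also have "(\<Sum>x\<in>UNIV. (norm (V' x))^2) = (\<Sum>i\<in>UNIV. (norm (V i))^2)"
    by (simp add: sum_UNIV_prod V'_def norm_sq_mat)
  finally show ?thesis .
qed



definition sdir :: "'d::finite \<Rightarrow> 'p::finite \<Rightarrow> real^'p^'p \<Rightarrow> real^'p^'d" where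
  "sdir k l F = (\<chi> a r. if a = k then F$l$r else 0)"

lemma sdir_inner:
  fixes B :: "real^'d::finite^'d"
  shows "inner B (sdir k l F ** transpose (sdir k l H)) = B$k$k * inner (F$l) (H$l)"
proof -
  have "sdir k l F ** transpose (sdir k l H) = (\<chi> a b. if a = k \<and> b = k then inner (F$l) (H$l) else 0)"
    by (auto simp: vec_eq_iff sdir_def matrix_matrix_mult_def transpose_def inner_vec_def inner_real_def)
  have dd: "(\<Sum>i\<in>UNIV. \<Sum>j\<in>UNIV. if i = k \<and> j = k then X else 0) = (X::real)" for X
  proof -
    have "(\<Sum>j\<in>UNIV. if i = k \<and> j = k then X else 0) = (if i = k then X else 0)" for i
      by (cases "i = k") simp_all
    then show ?thesis by simp
  qed
  show ?thesis
    by (simp add: \<open>sdir k l F ** transpose (sdir k l H) = _\<close> inner_vec_def inner_real_def if_distrib if_distribR dd cong: if_cong)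
qed

lemma sdir_sum:
  fixes B :: "real^'d::finite^'d" and F H :: "real^'p::finite^'p"
  shows "(\<Sum>k\<in>UNIV. \<Sum>l\<in>UNIV. inner B (sdir k l F ** transpose (sdir k l H))) = trace B * inner F H"
  apply (simp only: sdir_inner) 
  apply (simp add: trace_def inner_vec_def sum_distrib_left sum_distrib_right)
  apply (subst sum3_swap) apply simp
  done

lemma transpose_zero: "transpose (0::real^'c::finite^'r::finite) = 0"
  by (vector transpose_def)

lemma sdir_tangent:
  fixes S :: "real^'p::finite^'d::finite" and P :: "real^'p^'p"
  assumes SP: "S ** P = 0" and PT: "transpose P = P"
  shows "sdir k l P \<in> tangent S"
proof -
  have Psym: "P$l$r = P$r$l" for r
    using PT by (metis transpose_def vec_lambda_beta)
  have 1: "S ** transpose (sdir k l P) = 0"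
  proof -
    have h: "(\<Sum>r\<in>UNIV. S$a$r * P$r$l) = 0" for a
      using arg_cong[OF SP, of "\<lambda>X. X$a$l"] by (simp add: matrix_matrix_mult_def)
    show ?thesis
      unfolding vec_eq_iff
      apply (intro allI)
      subgoal for i j by (cases "j = k") (simp_all add: sdir_def matrix_matrix_mult_def transpose_def Psym h)
      done
  qed
  have 2: "sdir k l P ** transpose S = 0"
    using arg_cong[OF 1, of transpose] by (simp add: matrix_transpose_mul transpose_zero)
  show ?thesis using 1 2 by (simp add: tangent_def)
qed



lemma sum3_swap': "(\<Sum>k\<in>A. \<Sum>l\<in>B. \<Sum>i\<in>C. f k l i) = (\<Sum>i\<in>C. \<Sum>k\<in>A. \<Sum>l\<in>B. f k l i)"
  by (rule sum3_swap[symmetric])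

lemma sum4_swap: "(\<Sum>k\<in>A. \<Sum>l\<in>B. \<Sum>i\<in>C. \<Sum>j\<in>E. f k l i j) = (\<Sum>i\<in>C. \<Sum>j\<in>E. \<Sum>k\<in>A. \<Sum>l\<in>B. f k l i j)"
proof -
  have "(\<Sum>k\<in>A. \<Sum>l\<in>B. \<Sum>i\<in>C. \<Sum>j\<in>E. f k l i j) = (\<Sum>k\<in>A. \<Sum>i\<in>C. \<Sum>j\<in>E. \<Sum>l\<in>B. f k l i j)"
    by (rule sum.cong[OF refl], rule sum3_swap)
  also have "\<dots> = (\<Sum>i\<in>C. \<Sum>j\<in>E. \<Sum>k\<in>A. \<Sum>l\<in>B. f k l i j)" by (rule sum3_swap)
  finally show ?thesis .
qed

context
  fixes S :: "real^'p::finite^'d::finite"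
  assumes SS: "S ** transpose S = mat 1"
begin

lemma normS_sq: "(norm S)^2 = real CARD('d)"
  by (simp add: power2_norm_eq_inner inner_trace SS trace_I)

lemma trace_gram: "trace (transpose S ** S) = real CARD('d)"
  by (simp add: trace_mul_sym[of "transpose S"] SS trace_I)

lemma gram_self: "inner (transpose S ** S) (transpose S ** S) = real CARD('d)"
  by (simp add: inner_gram SS norm_mat1_sq)

lemma proj_zero: "S ** (mat 1 - transpose S ** S) = 0"
  by (simp add: matrix_sub_ldistrib matrix_mul_assoc SS)

lemma proj_sym: "transpose (mat 1 - transpose S ** S) = mat 1 - transpose S ** S"
  by (simp add: transpose_diff matrix_transpose_mul)

lemma proj_idem: "(mat 1 - transpose S ** S) ** (mat 1 - transpose S ** S) = mat 1 - transpose S ** S"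
proof -
  have GG: "(transpose S ** S) ** (transpose S ** S) = transpose S ** S"
    by (metis SS matrix_mul_assoc matrix_mul_rid)
  show ?thesis
    by (simp add: matrix_sub_ldistrib matrix_sub_rdistrib GG)
qed

lemma proj_split:
  fixes Y :: "real^'p^'r::finite"
  shows "(norm Y)^2 = (norm (Y ** (mat 1 - transpose S ** S)))^2 + (norm (Y ** transpose S))^2"
proof -
  let ?P = "mat 1 - transpose S ** S"
  have a: "(norm (Y ** ?P))^2 = inner Y Y - inner Y (Y ** (transpose S ** S))"
  proof -
    have "(norm (Y ** ?P))^2 = inner Y ((Y ** ?P) ** transpose ?P)"
      by (simp add: power2_norm_eq_inner inner_mult_left)
    also have "\<dots> = inner Y (Y ** ?P)"
      by (simp only: proj_sym flip: matrix_mul_assoc) (simp only: proj_idem)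
    also have "\<dots> = inner Y Y - inner Y (Y ** (transpose S ** S))"
      by (simp add: matrix_sub_ldistrib inner_diff_right)
    finally show ?thesis .
  qed
  have b: "(norm (Y ** transpose S))^2 = inner Y (Y ** (transpose S ** S))"
    by (simp add: power2_norm_eq_inner inner_mult_left matrix_mul_assoc)
  show ?thesis using a b by (simp add: power2_norm_eq_inner)
qed

lemma proj_le: "norm ((Y::real^'p^'r::finite) ** (mat 1 - transpose S ** S)) \<le> norm Y"
proof -
  have "(norm (Y ** (mat 1 - transpose S ** S)))^2 \<le> (norm Y)^2"
    using proj_split[of Y] by simp
  then show ?thesis using power2_le_imp_le by fastforce
qed

end

lemma P_inner:
  fixes S S' :: "real^'p::finite^'d::finite"
  assumes "S ** transpose S = mat 1" "S' ** transpose S' = mat 1"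
  shows "inner (mat 1 - transpose S ** S) (mat 1 - transpose S' ** S')
       = real CARD('p) - 2 * real CARD('d) + inner (transpose S ** S) (transpose S' ** S')"
proof -
  have 1: "inner (mat 1 :: real^'p^'p) (mat 1) = real CARD('p)" by (simp add: inner_mat1 trace_I)
  have 2: "inner (mat 1) (transpose S' ** S') = real CARD('d)"
    by (simp add: inner_commute[of "mat 1"] inner_mat1 trace_gram assms)
  have 3: "inner (transpose S ** S) (mat 1) = real CARD('d)"
    by (simp add: inner_mat1 trace_gram assms)
  show ?thesis by (simp add: inner_diff_left inner_diff_right 1 2 3)
qed

lemma norm_sum_sq_le:
  fixes f :: "'n::finite \<Rightarrow> 'a::real_normed_vector"
  shows "(norm (\<Sum>j\<in>UNIV. f j))^2 \<le> real CARD('n) * (\<Sum>j\<in>UNIV. (norm (f j))^2)"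
proof -
  have "norm (\<Sum>j\<in>UNIV. f j) \<le> (\<Sum>j\<in>UNIV. \<bar>norm (f j)\<bar> * \<bar>1\<bar>)"
    using norm_sum[of f UNIV] by simp
  also have "\<dots> \<le> L2_set (\<lambda>j. norm (f j)) UNIV * L2_set (\<lambda>j::'n. 1) UNIV"
    using L2_set_mult_ineq[of "\<lambda>j. norm (f j)" "\<lambda>j. 1" UNIV] by simp
  finally have h: "norm (\<Sum>j\<in>UNIV. f j) \<le> sqrt (\<Sum>j\<in>UNIV. (norm (f j))^2) * sqrt (real CARD('n))"
    by (simp add: L2_set_def)
  have "(norm (\<Sum>j\<in>UNIV. f j))^2 \<le> (sqrt (\<Sum>j\<in>UNIV. (norm (f j))^2) * sqrt (real CARD('n)))^2"
    by (rule power_mono[OF h norm_ge_zero])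
  also have "\<dots> = real CARD('n) * (\<Sum>j\<in>UNIV. (norm (f j))^2)"
    by (simp add: power_mult_distrib sum_nonneg)
  finally show ?thesis .
qed

lemma blk_transpose:
  assumes "transpose \<Delta> = \<Delta>"
  shows "transpose (blk \<Delta> j i) = blk \<Delta> i j"
proof -
  have "\<Delta>$x$y = \<Delta>$y$x" for x y
    using arg_cong[OF assms, of "\<lambda>X. X$x$y"] by (simp add: transpose_def)
  then show ?thesis by (simp add: vec_eq_iff blk_def transpose_def)
qed

lemma Amat_transpose:
  assumes "transpose \<Delta> = \<Delta>"
  shows "transpose (Amat \<Delta> j i) = Amat \<Delta> i j"
  by (simp add: Amat_def transpose_add blk_transpose[OF assms])

lemma trace_Lam:
  fixes \<Delta> :: "real^('n::finite \<times> 'd::finite)^('n \<times> 'd)" and S :: "'n \<Rightarrow> real^'p::finite^'d"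
  assumes "transpose \<Delta> = \<Delta>"
  shows "trace (Lam \<Delta> S i) = (\<Sum>j\<in>UNIV. trace (Amat \<Delta> i j ** S j ** transpose (S i)))"
proof -
  have "trace (S i ** transpose (S j) ** Amat \<Delta> j i) = trace (Amat \<Delta> i j ** S j ** transpose (S i))" for j
  proof -
    have "trace (S i ** transpose (S j) ** Amat \<Delta> j i) = trace (transpose (S i ** transpose (S j) ** Amat \<Delta> j i))"
      by (simp add: trace_transpose)
    also have "\<dots> = trace (Amat \<Delta> i j ** S j ** transpose (S i))"
      by (simp add: matrix_transpose_mul Amat_transpose[OF assms] matrix_mul_assoc)
    finally show ?thesis .
  qed
  then show ?thesis
    by (simp add: Lam_def trace_scaleR trace_sum trace_add sum.distrib)
qed



lemma quad_bound:
  fixes q c a \<eta> :: real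
  assumes q: "q > 0" and c: "c \<ge> 0" and a: "a \<ge> 0" and e: "\<eta> \<ge> 0"
    and h: "q * \<eta>^2 \<le> 4 * c * a * \<eta> + (c^2 / q) * a^2"
  shows "\<eta> \<le> (2 + sqrt 5) * c / q * a"
proof -
  define r where "r = c * a / q"
  have r0: "r \<ge> 0" unfolding r_def using q c a by simp
  have "\<eta>^2 \<le> 4 * r * \<eta> + r^2"
  proof -
    have eq: "q * (4 * r * \<eta> + r^2) = 4 * c * a * \<eta> + (c^2 / q) * a^2"
      using q by (simp add: r_def field_simps power2_eq_square)
    have "q * \<eta>^2 \<le> q * (4 * r * \<eta> + r^2)"
      using h by (simp only: eq)
    then show ?thesis using q by simp
  qed
  have s5: "sqrt 5 * sqrt 5 = (5::real)" by simp
  have fac: "(\<eta> - (2 + sqrt 5) * r) * (\<eta> - (2 - sqrt 5) * r) = \<eta>^2 - 4 * r * \<eta> - r^2"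
    by (simp add: algebra_simps power2_eq_square s5)
  show ?thesis
  proof (rule ccontr)
    assume "\<not> ?thesis"
    then have g: "\<eta> > (2 + sqrt 5) * r" by (simp add: r_def mult.commute mult.left_commute)
    have s0: "sqrt 5 \<ge> 0" by simp
    have f1: "\<eta> - (2 + sqrt 5) * r > 0" using g by simp
    have "(2 - sqrt 5) * r \<le> (2 + sqrt 5) * r" using r0 s0 by (intro mult_right_mono) auto
    then have f2: "\<eta> - (2 - sqrt 5) * r > 0" using g by simp
    have "(\<eta> - (2 + sqrt 5) * r) * (\<eta> - (2 - sqrt 5) * r) > 0" using f1 f2 by simp
    then show False using fac \<open>\<eta>^2 \<le> 4 * r * \<eta> + r^2\<close> by simp
  qed
qed



lemma final_arith:
  fixes n d p D t \<gamma> \<eta> m \<rho> \<tau> W \<omega> Es :: real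
  assumes n1: "n \<ge> 1" and d1: "d \<ge> 1" and pd: "p \<ge> 2*d + 1" and D0: "D \<ge> 0" and t0: "t \<ge> 0"
    and g1: "\<gamma> \<ge> 1" and tg: "t \<le> \<gamma> * D" and eta0: "\<eta> \<ge> 0"
    and soc: "(p-d)*(m+\<rho>) \<ge> (p-2*d)*n^2*d + (p-2*d)*\<tau> + d*W + \<omega>"
    and W_lb: "W \<ge> m - Es/n" and e_ub: "Es \<le> D^2*n*d"
    and k: "\<eta>^2 \<le> 2*(n^2*d - m)/n"
    and rho: "\<rho> - \<tau> \<le> 2 * D * sqrt (n*d) * \<eta>"
    and omega: "\<omega> - d*\<tau> \<ge> -(2 * sqrt 2 * t * sqrt (n*d) * \<eta>)"
  shows "\<eta> \<le> (2 + sqrt 5) * (p + d) * \<gamma> / (p - 2 * d) * sqrt (d / n) * D"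
proof -
  define q where "q = p - 2*d"
  define c where "c = (p + d) * \<gamma>"
  define a where "a = sqrt (d / n) * D"
  define s where "s = sqrt (d / n)"
  have q0: "q > 0" using pd d1 by (simp add: q_def)
  have c0: "c \<ge> 0" using pd d1 g1 by (simp add: c_def)
  have s0: "s \<ge> 0" using n1 d1 by (simp add: s_def)
  have a0: "a \<ge> 0" using D0 s0 by (simp add: a_def s_def)
  have sq: "sqrt (n*d) = n * s"
  proof -
    have e: "n * d = n^2 * (d/n)" using n1 by (simp add: power2_eq_square)
    have "sqrt (n*d) = sqrt (n^2) * sqrt (d/n)" unfolding e by (rule real_sqrt_mult)
    then show ?thesis using n1 by (simp add: s_def)
  qed
  have ss: "s^2 = d/n" using n1 d1 by (simp add: s_def)
  have Es: "Es / n \<le> D^2 * d" using e_ub n1 by (simp add: divide_le_eq mult_ac)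
  have A2: "d*W \<ge> d*m - d*(Es/n)"
  proof -
    have "d*(m - Es/n) \<le> d*W" by (rule mult_left_mono[OF W_lb]) (use d1 in simp)
    then show ?thesis by (simp add: right_diff_distrib)
  qed
  have A3: "d*(Es/n) \<le> d*(D^2*d)" by (rule mult_left_mono[OF Es]) (use d1 in simp)
  have A4: "(p-d)*(\<rho> - \<tau>) \<le> (p-d)*(2 * D * sqrt (n*d) * \<eta>)"
    by (rule mult_left_mono[OF rho]) (use pd d1 in simp)
  have main: "q*(n^2*d - m) \<le> (p-d)*(2 * D * sqrt (n*d) * \<eta>) + 2 * sqrt 2 * t * sqrt (n*d) * \<eta> + d*(D^2*d)"
  proof -
    have i1: "(p-d)*(m+\<rho>) = q*m + d*m + (p-d)*(\<rho> - \<tau>) + q*\<tau> + d*\<tau>" by (simp add: q_def algebra_simps)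
    have i2: "(p-2*d)*n^2*d + (p-2*d)*\<tau> = q*(n^2*d) + q*\<tau>" by (simp add: q_def algebra_simps)
    have i3: "q*(n^2*d - m) = q*(n^2*d) - q*m" by (simp add: algebra_simps)
    show ?thesis using soc i1 i2 i3 A2 A3 A4 omega by linarith
  qed
  have K1: "n * \<eta>^2 / 2 \<le> n^2*d - m" using k n1 by (simp add: le_divide_eq mult_ac)
  have K2: "q * (n * \<eta>^2 / 2) \<le> q * (n^2*d - m)" by (rule mult_left_mono[OF K1]) (use q0 in simp)
  have ts: "t * s \<le> \<gamma> * a" using mult_right_mono[OF tg s0] by (simp add: a_def s_def mult_ac)
  have st: "2 * sqrt 2 * t * sqrt (n*d) * \<eta> = 2 * sqrt 2 * n * \<eta> * (t * s)" unfolding sq by (simp add: mult_ac)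
  have st2: "2 * sqrt 2 * n * \<eta> * (t * s) \<le> 2 * sqrt 2 * n * \<eta> * (\<gamma> * a)"
    by (rule mult_left_mono[OF ts]) (use n1 eta0 in simp)
  have dd: "d*(D^2*d) = n * d * a^2" using n1 d1 by (simp add: a_def power_mult_distrib ss[unfolded s_def] power2_eq_square)
  have pdD: "(p-d)*(2 * D * sqrt (n*d) * \<eta>) = n * (2 * (p-d) * a * \<eta>)" unfolding sq by (simp add: a_def s_def mult_ac)
  have step: "(n/2) * (q * \<eta>^2) \<le> (n/2) * (4*(p-d)*a*\<eta> + 4* sqrt 2*\<gamma>*a*\<eta> + 2*d*a^2)"
  proof -
    have l: "(n/2) * (q * \<eta>^2) = q * (n * \<eta>^2 / 2)" by (simp add: mult_ac)
    have r: "(n/2) * (4*(p-d)*a*\<eta> + 4* sqrt 2*\<gamma>*a*\<eta> + 2*d*a^2)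
        = n * (2 * (p-d) * a * \<eta>) + 2 * sqrt 2 * n * \<eta> * (\<gamma> * a) + n * d * a^2"
      by (simp add: algebra_simps)
    show ?thesis unfolding l r using K2 main st st2 dd pdD by linarith
  qed
  then have h0: "q * \<eta>^2 \<le> 4*(p-d)*a*\<eta> + 4* sqrt 2*\<gamma>*a*\<eta> + 2*d*a^2"
    using n1 by (simp add: mult_le_cancel_left_pos)
  have sq2: "sqrt 2 \<le> 2"
  proof -
    have "sqrt 2 \<le> sqrt 4" by (rule real_sqrt_le_mono) simp
    also have "sqrt 4 = (2::real)" by simp
    finally show ?thesis .
  qed
  have coef: "(p-d) + sqrt 2 * \<gamma> \<le> c"
  proof -
    have "(p + d - sqrt 2) * 1 \<le> (p + d - sqrt 2) * \<gamma>"
      by (rule mult_left_mono[OF g1]) (use sq2 pd d1 in linarith)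
    then show ?thesis using sq2 d1 by (simp add: c_def algebra_simps)
  qed
  have h1: "4*(p-d)*a*\<eta> + 4* sqrt 2*\<gamma>*a*\<eta> \<le> 4*c*a*\<eta>"
  proof -
    have "(4*a*\<eta>) * ((p-d) + sqrt 2 * \<gamma>) \<le> (4*a*\<eta>) * c"
      by (rule mult_left_mono[OF coef]) (use a0 eta0 in simp)
    then show ?thesis by (simp add: algebra_simps)
  qed
  have h2: "2*d*a^2 \<le> (c^2/q)*a^2"
  proof -
    have "(p+d)^2 \<le> c^2" unfolding c_def using g1 pd d1
      by (intro power_mono) (auto intro: order_trans[of _ "(p+d)*1"] mult_left_mono)
    moreover have "2*d*q \<le> (p+d)^2" unfolding q_def by (simp add: algebra_simps power2_eq_square)
    ultimately have "2*d \<le> c^2/q" using q0 by (simp add: le_divide_eq)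
    then show ?thesis by (rule mult_right_mono) simp
  qed
  have "q * \<eta>^2 \<le> 4 * c * a * \<eta> + (c^2 / q) * a^2" using h0 h1 h2 by linarith
  then have "\<eta> \<le> (2 + sqrt 5) * c / q * a" by (rule quad_bound[OF q0 c0 a0 eta0])
  then show ?thesis by (simp add: c_def q_def a_def mult_ac)
qed



theorem proposition4:
  fixes \<Delta> :: "real^('n::finite \<times> 'd::finite)^('n \<times> 'd)"
    and S :: "'n \<Rightarrow> real^'p::finite^'d"
  assumes "CARD('p) \<ge> 2 * CARD('d) + 1"
    and "transpose \<Delta> = \<Delta>"
    and "\<forall>i. blk \<Delta> i i = 0"
    and "second_order_critical \<Delta> S"
  shows "let \<gamma> = max (op_norm (partial_trace \<Delta>) / op_norm \<Delta>) 1;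
             \<delta> = (2 + sqrt 5) * (real CARD('p) + real CARD('d)) * \<gamma>
                 / (real CARD('p) - 2 * real CARD('d))
         in dF S \<le> \<delta> * sqrt (real CARD('d) / real CARD('n)) * op_norm \<Delta>"
proof -
  define n where "n = real CARD('n)"
  define d where "d = real CARD('d)"
  define p where "p = real CARD('p)"
  define D where "D = op_norm \<Delta>"
  define t where "t = op_norm (partial_trace \<Delta>)"
  define \<gamma> where "\<gamma> = max (t / D) 1"
  have n1: "n \<ge> 1" unfolding n_def by simp
  have d1: "d \<ge> 1" unfolding d_def by simp
  have pd: "p \<ge> 2*d + 1" using assms(1) unfolding p_def d_def by linarith
  have D0: "D \<ge> 0" unfolding D_def op_norm_def by (rule onorm_pos_le) simp
  have t0: "t \<ge> 0" unfolding t_def op_norm_def by (rule onorm_pos_le) simp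
  have g1: "\<gamma> \<ge> 1" unfolding \<gamma>_def by simp
  have tg: "t \<le> \<gamma> * D"
  proof (cases "D = 0")
    case True
    then have "\<forall>x. \<Delta> *v x = 0" unfolding D_def op_norm_def
      using onorm_eq_0[OF matrix_vector_mul_bounded_linear[of \<Delta>]] by simp
    then have "\<Delta> = 0" by (simp add: matrix_eq)
    then have "partial_trace \<Delta> = 0"
      by (simp add: partial_trace_def blk_def vec_eq_iff trace_def)
    moreover have "((*v) (0::real^'n^'n)) = (\<lambda>x. 0)" by (simp add: fun_eq_iff matrix_vector_mult_def vec_eq_iff)
    ultimately have "t = 0" unfolding t_def op_norm_def by (simp add: onorm_zero)
    then show ?thesis using True by simp
  next
    case False
    then have "D > 0" using D0 by simp
    have "t / D \<le> \<gamma>" unfolding \<gamma>_def by simp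
    then show ?thesis using \<open>D > 0\<close> by (simp add: divide_le_eq mult.commute)
  qed
  have feas: "feasible S" and FO: "\<forall>i. (\<Sum>j\<in>UNIV. Amat \<Delta> i j ** S j) = Lam \<Delta> S i ** S i"
    and SOC: "\<forall>Sd :: 'n \<Rightarrow> real^'p^'d. (\<forall>i. Sd i \<in> tangent (S i)) \<longrightarrow>
        (\<Sum>i\<in>UNIV. frob_inner (Lam \<Delta> S i) (Sd i ** transpose (Sd i)))
        \<ge> (\<Sum>i\<in>UNIV. \<Sum>j\<in>UNIV. frob_inner (Amat \<Delta> i j) (Sd i ** transpose (Sd j)))"
    using assms(4) unfolding second_order_critical_def by blast+
  have SS: "\<And>i. S i ** transpose (S i) = mat 1" using feas unfolding feasible_def by blast
  define P where "P i = mat 1 - transpose (S i) ** S i" for i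
  define G where "G i = transpose (S i) ** S i" for i
  define M where "M = (\<Sum>i\<in>UNIV. S i)"
  define R where "R i = (\<Sum>j\<in>UNIV. blk \<Delta> i j ** S j)" for i
  define T where "T i j = trace (blk \<Delta> i j)" for i j
  define w where "w i j = inner (G i) (G j)" for i j
  define m where "m = (norm M)^2"
  define \<rho> where "\<rho> = (\<Sum>i\<in>UNIV. inner (R i) (S i))"
  define \<tau> where "\<tau> = (\<Sum>i\<in>UNIV. \<Sum>j\<in>UNIV. T i j)"
  define \<omega> where "\<omega> = (\<Sum>i\<in>UNIV. \<Sum>j\<in>UNIV. T i j * w i j)"
  define W where "W = (\<Sum>i\<in>UNIV. \<Sum>j\<in>UNIV. w i j)"
  define e where "e i = (norm (M ** P i))^2" for i
  have normS: "\<And>i. (norm (S i))^2 = d" using normS_sq[OF SS] unfolding d_def .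
  have sumS: "(\<Sum>i\<in>UNIV. (norm (S i))^2) = n * d" by (simp add: normS n_def)
  have m_eq: "m = (\<Sum>i\<in>UNIV. \<Sum>j\<in>UNIV. inner (S j) (S i))"
    by (simp add: m_def M_def power2_norm_eq_inner inner_sum_left inner_sum_right)
  have tr1: "\<And>i j. trace (Amat \<Delta> i j ** S j ** transpose (S i)) = inner (S j) (S i) + inner (blk \<Delta> i j ** S j) (S i)"
    by (simp add: Amat_def matrix_add_rdistrib trace_add inner_trace)
  have trLam: "(\<Sum>i\<in>UNIV. trace (Lam \<Delta> S i)) = m + \<rho>"
  proof -
    have "(\<Sum>i\<in>UNIV. trace (Lam \<Delta> S i)) = (\<Sum>i\<in>UNIV. \<Sum>j\<in>UNIV. inner (S j) (S i)) + (\<Sum>i\<in>UNIV. \<Sum>j\<in>UNIV. inner (blk \<Delta> i j ** S j) (S i))"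
      by (simp add: trace_Lam[OF assms(2)] tr1 sum.distrib)
    also have "(\<Sum>i\<in>UNIV. \<Sum>j\<in>UNIV. inner (S j) (S i)) = m"
      unfolding m_eq by (rule refl)
    also have "(\<Sum>i\<in>UNIV. \<Sum>j\<in>UNIV. inner (blk \<Delta> i j ** S j) (S i)) = \<rho>"
      by (simp add: \<rho>_def R_def inner_sum_left)
    finally show ?thesis .
  qed
  have Pin: "\<And>i j. inner (P i) (P j) = p - 2*d + w i j"
    unfolding P_def w_def G_def p_def d_def by (rule P_inner[OF SS SS])
  have wii: "\<And>i. w i i = d" unfolding w_def G_def d_def by (rule gram_self[OF SS])
  have trA: "\<And>i j. trace (Amat \<Delta> i j) = d + T i j"
    by (simp add: Amat_def trace_add trace_I T_def d_def)
  have soc: "(p - d) * (m + \<rho>) \<ge> (\<Sum>i\<in>UNIV. \<Sum>j\<in>UNIV. (d + T i j) * (p - 2*d + w i j))"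
  proof -
    have key: "(\<Sum>i\<in>UNIV. \<Sum>j\<in>UNIV. inner (Amat \<Delta> i j) (sdir k l (P i) ** transpose (sdir k l (P j))))
        \<le> (\<Sum>i\<in>UNIV. inner (Lam \<Delta> S i) (sdir k l (P i) ** transpose (sdir k l (P i))))" for k l
    proof -
      have "\<forall>i. sdir k l (P i) \<in> tangent (S i)"
        unfolding P_def using sdir_tangent[OF proj_zero[OF SS] proj_sym] SS by blast
      then show ?thesis using SOC[rule_format, of "\<lambda>i. sdir k l (P i)"] by (simp add: frob_inner_eq)
    qed
    have "(\<Sum>k\<in>UNIV. \<Sum>l\<in>UNIV. \<Sum>i\<in>UNIV. \<Sum>j\<in>UNIV. inner (Amat \<Delta> i j) (sdir k l (P i) ** transpose (sdir k l (P j))))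
        \<le> (\<Sum>k\<in>UNIV. \<Sum>l\<in>UNIV. \<Sum>i\<in>UNIV. inner (Lam \<Delta> S i) (sdir k l (P i) ** transpose (sdir k l (P i))))"
      by (intro sum_mono key)
    also have "\<dots> = (\<Sum>i\<in>UNIV. trace (Lam \<Delta> S i) * inner (P i) (P i))"
      by (simp only: sum3_swap' sdir_sum)
    also have "\<dots> = (\<Sum>i\<in>UNIV. trace (Lam \<Delta> S i)) * (p - d)"
      by (simp add: Pin wii sum_distrib_right)
    also have "\<dots> = (p - d) * (m + \<rho>)"
      by (simp add: trLam mult.commute)
    finally have "(\<Sum>i\<in>UNIV. \<Sum>j\<in>UNIV. trace (Amat \<Delta> i j) * inner (P i) (P j)) \<le> (p - d) * (m + \<rho>)"
      by (simp only: sum4_swap sdir_sum)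
    then show ?thesis by (simp add: Pin trA)
  qed
  have soc2: "(\<Sum>i\<in>UNIV. \<Sum>j\<in>UNIV. (d + T i j) * (p - 2*d + w i j)) = (p-2*d)*n^2*d + (p-2*d)*\<tau> + d*W + \<omega>"
  proof -
    have pt: "\<And>i j. (d + T i j) * (p - 2*d + w i j) = d*(p-2*d) + d * w i j + (p-2*d) * T i j + T i j * w i j"
      by (simp add: algebra_simps)
    have "(\<Sum>i\<in>UNIV. \<Sum>j\<in>UNIV. (d + T i j) * (p - 2*d + w i j))
       = (\<Sum>i\<in>(UNIV::'n set). \<Sum>j\<in>(UNIV::'n set). d*(p-2*d)) + d * W + (p-2*d) * \<tau> + \<omega>"
      unfolding pt W_def \<tau>_def \<omega>_def by (simp add: sum.distrib sum_distrib_left)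
    also have "(\<Sum>i\<in>(UNIV::'n set). \<Sum>j\<in>(UNIV::'n set). d*(p-2*d)) = (p-2*d)*n^2*d"
      by (simp add: n_def power2_eq_square)
    finally show ?thesis by simp
  qed
  have W_lb: "W \<ge> m - (\<Sum>i\<in>UNIV. e i)/n"
  proof -
    have row: "(\<Sum>j\<in>UNIV. w i j) \<ge> (m - e i) / n" for i
    proof -
      have wsym: "w i j = (norm (S j ** transpose (S i)))^2" for j
        unfolding w_def G_def by (subst inner_commute) (rule inner_gram)
      have MS: "M ** transpose (S i) = (\<Sum>j\<in>UNIV. S j ** transpose (S i))"
        by (simp add: M_def matrix_sum_rdistrib)
      have "(norm (M ** transpose (S i)))^2 \<le> n * (\<Sum>j\<in>UNIV. w i j)"
        unfolding MS wsym n_def by (rule norm_sum_sq_le)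
      moreover have "m = e i + (norm (M ** transpose (S i)))^2"
        unfolding m_def e_def P_def by (rule proj_split[OF SS])
      ultimately show ?thesis using n1 by (simp add: divide_le_eq mult.commute)
    qed
    have "W \<ge> (\<Sum>i\<in>UNIV. (m - e i) / n)" unfolding W_def by (intro sum_mono row)
    also have "(\<Sum>i\<in>UNIV. (m - e i) / n) = m - (\<Sum>i\<in>UNIV. e i)/n"
      using n1 by (simp add: sum_divide_distrib[symmetric] sum_subtractf n_def field_simps)
    finally show ?thesis .
  qed
  have e_ub: "(\<Sum>i\<in>UNIV. e i) \<le> D^2 * n * d"
  proof -
    have ei: "e i \<le> (norm (R i))^2" for i
    proof -
      have "(\<Sum>j\<in>UNIV. Amat \<Delta> i j ** S j) = M + R i"
        by (simp add: Amat_def matrix_add_rdistrib sum.distrib M_def R_def)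
      then have "(M + R i) ** P i = Lam \<Delta> S i ** (S i ** P i)"
        using FO by (simp add: matrix_mul_assoc)
      also have "S i ** P i = 0" unfolding P_def by (rule proj_zero[OF SS])
      finally have "M ** P i = - (R i ** P i)"
        by (simp add: matrix_add_rdistrib eq_neg_iff_add_eq_0)
      then have "norm (M ** P i) = norm (R i ** P i)" by simp
      also have "\<dots> \<le> norm (R i)" unfolding P_def by (rule proj_le[OF SS])
      finally show ?thesis unfolding e_def by (simp add: power_mono)
    qed
    define x where "x = sqrt (\<Sum>i\<in>UNIV. (norm (R i))^2)"
    have x0: "x \<ge> 0" unfolding x_def by (simp add: sum_nonneg)
    have xx: "x^2 = (\<Sum>i\<in>UNIV. (norm (R i))^2)" unfolding x_def by (simp add: sum_nonneg)
    have db: "(\<Sum>i\<in>UNIV. inner (R i) (R i)) \<le> D * sqrt (\<Sum>i\<in>UNIV. (norm (R i))^2) * sqrt (\<Sum>i\<in>UNIV. (norm (S i))^2)"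
      using delta_bound[of \<Delta> S R] by (simp add: R_def D_def)
    have "x^2 \<le> D * x * sqrt (n * d)"
      using db unfolding xx x_def[symmetric] sumS by (simp add: power2_norm_eq_inner)
    then have "x \<le> D * sqrt (n * d)"
      using x0 D0 n1 d1 by (cases "x = 0") (auto simp: power2_eq_square mult.commute mult.left_commute)
    then have "x^2 \<le> (D * sqrt (n * d))^2" using x0 by (simp add: power_mono)
    also have "\<dots> = D^2 * n * d" using n1 d1 by (simp add: power_mult_distrib)
    finally have "(\<Sum>i\<in>UNIV. (norm (R i))^2) \<le> D^2 * n * d" unfolding xx .
    moreover have "(\<Sum>i\<in>UNIV. e i) \<le> (\<Sum>i\<in>UNIV. (norm (R i))^2)" by (intro sum_mono ei)
    ultimately show ?thesis by linarith
  qed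
  obtain k where k: "(\<Sum>i\<in>UNIV. (norm (S i - S k))^2) \<le> 2*(n^2*d - m)/n"
  proof -
    have nd: "(norm (S i - S k))^2 = 2*d - 2 * inner (S k) (S i)" for i k
      using normS[of i] normS[of k]
      by (simp add: power2_norm_eq_inner inner_diff_left inner_diff_right inner_commute)
    have sw: "(\<Sum>k\<in>UNIV. \<Sum>i\<in>UNIV. inner (S k) (S i)) = m"
      unfolding m_eq by (rule sum.swap)
    have "(\<Sum>k\<in>UNIV. \<Sum>i\<in>UNIV. (norm (S i - S k))^2) = (\<Sum>k\<in>UNIV. \<Sum>i\<in>UNIV. 2*d - 2 * inner (S k) (S i))"
      by (simp only: nd)
    also have "\<dots> = (\<Sum>k\<in>(UNIV::'n set). \<Sum>i\<in>(UNIV::'n set). 2*d) - 2 * (\<Sum>k\<in>UNIV. \<Sum>i\<in>UNIV. inner (S k) (S i))"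
      by (simp add: sum_subtractf sum_distrib_left)
    also have "\<dots> = 2*(n^2*d - m)"
      unfolding sw by (simp add: n_def power2_eq_square algebra_simps)
    finally have tot: "(\<Sum>k\<in>UNIV. \<Sum>i\<in>UNIV. (norm (S i - S k))^2) = 2*(n^2*d - m)" .
    show ?thesis
    proof (rule ccontr)
      assume "\<not> ?thesis"
      then have "\<forall>k. (\<Sum>i\<in>UNIV. (norm (S i - S k))^2) > 2*(n^2*d - m)/n" using that by (meson not_le)
      then have "(\<Sum>k\<in>(UNIV::'n set). 2*(n^2*d - m)/n) < (\<Sum>k\<in>UNIV. \<Sum>i\<in>UNIV. (norm (S i - S k))^2)"
        by (intro sum_strict_mono) auto
      then show False using tot n1 by (simp add: n_def)
    qed
  qed
  define \<eta> where "\<eta> = sqrt (\<Sum>i\<in>UNIV. (norm (S i - S k))^2)"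
  have dF_le: "dF S \<le> \<eta>"
    unfolding dF_def
  proof (rule cInf_lower)
    show "\<eta> \<in> {sqrt (\<Sum>i\<in>UNIV. (norm (S i - Q))\<^sup>2) | Q :: real^'p^'d. Q ** transpose Q = mat 1}"
      unfolding \<eta>_def using SS[of k] by blast
    show "bdd_below {sqrt (\<Sum>i\<in>UNIV. (norm (S i - Q))\<^sup>2) | Q :: real^'p^'d. Q ** transpose Q = mat 1}"
      by (rule bdd_belowI[of _ 0]) (auto simp: sum_nonneg)
  qed
  define Q where "Q = S k"
  define E where "E i = S i - Q" for i
  have QQ: "Q ** transpose Q = mat 1" unfolding Q_def by (rule SS)
  have normQ: "(norm Q)^2 = d" unfolding Q_def by (rule normS)
  have eta0: "\<eta> \<ge> 0" unfolding \<eta>_def by (simp add: sum_nonneg)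
  have sqE: "sqrt (\<Sum>i\<in>UNIV. (norm (E i))^2) = \<eta>" unfolding \<eta>_def E_def Q_def ..
  have sumE: "(\<Sum>i\<in>UNIV. (norm (E i))^2) = \<eta>^2" unfolding \<eta>_def E_def Q_def by (simp add: sum_nonneg)
  have sumQ: "(\<Sum>i\<in>(UNIV::'n set). (norm Q)^2) = n * d" by (simp add: normQ n_def)
  have rho: "\<rho> - \<tau> \<le> 2 * D * sqrt (n*d) * \<eta>"
  proof -
    have Tq: "T i j = inner (blk \<Delta> i j ** Q) Q" for i j
      by (simp add: T_def inner_mult_left QQ inner_mat1)
    have per: "inner (R i) (S i) - (\<Sum>j\<in>UNIV. T i j) = inner (R i) (E i) + inner (\<Sum>j\<in>UNIV. blk \<Delta> i j ** E j) Q" for i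
    proof -
      have "(\<Sum>j\<in>UNIV. blk \<Delta> i j ** E j) = R i - (\<Sum>j\<in>UNIV. blk \<Delta> i j ** Q)"
        by (simp add: E_def R_def matrix_sub_ldistrib sum_subtractf)
      then show ?thesis
        by (simp add: Tq inner_sum_left[symmetric] E_def inner_diff_left inner_diff_right)
    qed
    have eq: "\<rho> - \<tau> = (\<Sum>i\<in>UNIV. inner (R i) (E i)) + (\<Sum>i\<in>UNIV. inner (\<Sum>j\<in>UNIV. blk \<Delta> i j ** E j) Q)"
      unfolding \<rho>_def \<tau>_def by (simp add: sum_subtractf[symmetric] per sum.distrib)
    have b1: "(\<Sum>i\<in>UNIV. inner (R i) (E i)) \<le> D * \<eta> * sqrt (n*d)"
      unfolding R_def using delta_bound[of \<Delta> S E] by (simp add: sqE sumS D_def)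
    have b2: "(\<Sum>i\<in>UNIV. inner (\<Sum>j\<in>UNIV. blk \<Delta> i j ** E j) Q) \<le> D * sqrt (n*d) * \<eta>"
      using delta_bound[of \<Delta> E "\<lambda>i. Q"] by (simp add: sqE normQ n_def D_def)
    show ?thesis using eq b1 b2 by (simp add: mult_ac)
  qed
  have omega: "\<omega> - d*\<tau> \<ge> -(2 * sqrt 2 * t * sqrt (n*d) * \<eta>)"
  proof -
    define GQ where "GQ = transpose Q ** Q"
    define H where "H i = G i - GQ" for i
    define K where "K = partial_trace \<Delta>"
    have KT: "K$i$j = T i j" for i j by (simp add: K_def partial_trace_def T_def)
    have tK: "onorm ((*v) K) = t" by (simp add: t_def op_norm_def K_def)
    have GQQ: "inner GQ GQ = d" unfolding GQ_def d_def by (rule gram_self[OF QQ])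
    have per: "w i j - d = inner (G i) (H j) + inner (H i) GQ" for i j
      by (simp add: w_def H_def GQQ[symmetric] inner_diff_left inner_diff_right)
    have "\<omega> - d * \<tau> = (\<Sum>i\<in>UNIV. \<Sum>j\<in>UNIV. T i j * (w i j - d))"
      by (simp add: \<omega>_def \<tau>_def right_diff_distrib sum_subtractf sum_distrib_left mult.commute)
    also have "\<dots> = (\<Sum>i\<in>UNIV. \<Sum>j\<in>UNIV. T i j * inner (G i) (H j)) + (\<Sum>i\<in>UNIV. \<Sum>j\<in>UNIV. T i j * inner (H i) GQ)"
      by (simp add: per distrib_left sum.distrib)
    finally have eq: "\<omega> - d * \<tau> = (\<Sum>i\<in>UNIV. \<Sum>j\<in>UNIV. T i j * inner (G i) (H j)) + (\<Sum>i\<in>UNIV. \<Sum>j\<in>UNIV. T i j * inner (H i) GQ)" .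
    have normG: "(norm (G i))^2 = d" for i using wii[of i] by (simp add: w_def power2_norm_eq_inner)
    have sumG: "(\<Sum>i\<in>UNIV. (norm (G i))^2) = n * d" by (simp add: normG n_def)
    have normGQ: "(norm GQ)^2 = d" by (simp add: power2_norm_eq_inner GQQ)
    define h where "h = sqrt (\<Sum>i\<in>UNIV. (norm (H i))^2)"
    have b1: "- (\<Sum>i\<in>UNIV. \<Sum>j\<in>UNIV. T i j * inner (G i) (H j)) \<le> t * sqrt (n*d) * h"
      using bilin_bound[of K "\<lambda>i. - G i" H]
      by (simp add: KT sumG h_def tK sum_negf[symmetric])
    have b2: "- (\<Sum>i\<in>UNIV. \<Sum>j\<in>UNIV. T i j * inner (H i) GQ) \<le> t * h * sqrt (n*d)"
      using bilin_bound[of K "\<lambda>i. - H i" "\<lambda>j. GQ"]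
      by (simp add: KT normGQ n_def h_def tK sum_negf[symmetric])
    have Hi: "(norm (H i))^2 \<le> 2 * (norm (E i))^2" for i
    proof -
      define C where "C = S i ** transpose Q"
      have gi: "inner (G i) GQ = (norm C)^2" unfolding G_def GQ_def C_def by (rule inner_gram)
      have nH: "(norm (H i))^2 = 2*d - 2*(norm C)^2"
        using wii[of i] GQQ gi
        by (simp add: H_def w_def power2_norm_eq_inner inner_diff_left inner_diff_right inner_commute[of GQ "G i"])
      have nE: "(norm (E i))^2 = 2*d - 2 * inner (S i) Q"
        using normS[of i] normQ
        by (simp add: E_def power2_norm_eq_inner inner_diff_left inner_diff_right inner_commute[of Q "S i"])
      have trC: "inner C (mat 1) = inner (S i) Q" by (simp add: C_def inner_mat1 inner_trace)
      have "0 \<le> (norm (C - mat 1))^2" by simp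
      also have "\<dots> = (norm C)^2 - 2 * inner C (mat 1) + (norm (mat 1 :: real^'d^'d))^2"
        by (simp add: power2_norm_eq_inner inner_diff_left inner_diff_right inner_commute[of "mat 1" C])
      finally have "0 \<le> (norm C)^2 - 2 * inner (S i) Q + d"
        unfolding trC norm_mat1_sq d_def .
      then show ?thesis using nH nE by linarith
    qed
    have "(\<Sum>i\<in>UNIV. (norm (H i))^2) \<le> (\<Sum>i\<in>UNIV. 2 * (norm (E i))^2)" by (intro sum_mono Hi)
    also have "\<dots> = 2 * \<eta>^2" by (simp add: sum_distrib_left[symmetric] sumE)
    finally have "h \<le> sqrt (2 * \<eta>^2)" unfolding h_def by (rule real_sqrt_le_mono)
    also have "\<dots> = sqrt 2 * \<eta>" using eta0 by (simp add: real_sqrt_mult)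
    finally have hb: "h \<le> sqrt 2 * \<eta>" .
    have tn0: "t * sqrt (n*d) \<ge> 0" using t0 n1 d1 by (intro mult_nonneg_nonneg) auto
    have "t * sqrt (n*d) * h \<le> t * sqrt (n*d) * (sqrt 2 * \<eta>)" by (rule mult_left_mono[OF hb tn0])
    moreover have "t * h * sqrt (n*d) = t * sqrt (n*d) * h" by (simp add: mult_ac)
    moreover have "2 * sqrt 2 * t * sqrt (n*d) * \<eta> = 2 * (t * sqrt (n*d) * (sqrt 2 * \<eta>))" by (simp add: mult_ac)
    ultimately show ?thesis using eq b1 b2 by linarith
  qed
  have final: "\<eta> \<le> (2 + sqrt 5) * (p + d) * \<gamma> / (p - 2 * d) * sqrt (d / n) * D"
  proof (rule final_arith[OF n1 d1 pd D0 t0 g1 tg eta0 _ W_lb e_ub _ rho omega])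
    show "(p-d)*(m+\<rho>) \<ge> (p-2*d)*n^2*d + (p-2*d)*\<tau> + d*W + \<omega>" using soc soc2 by simp
    show "\<eta>^2 \<le> 2*(n^2*d - m)/n" using k unfolding \<eta>_def by (simp add: sum_nonneg)
  qed
  show ?thesis
    using dF_le final unfolding Let_def \<gamma>_def t_def D_def p_def d_def n_def by simp
qed

end
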